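(* If $X\in \mathcal{B(H)}$ and $q \in \mathcal{D'}$, then \[ w_q \left(\begin{bmatrix} 0 & X\\ X & 0 \end{bmatrix}\right) \ge \frac{|q|}{2}\|X\|+ \frac{|q|}{2}\big|\|\mathcal{R}(X)\|-\|\mathcal{I}(X)\|\big|. \]
   Context: $\mathcal{H}$ is a complex Hilbert space, $\mathcal{B(H)}$ the bounded operators on it with operator norm; $2\times2$ operator matrices act on $\mathcal{H}\oplus\mathcal{H}$. $\mathcal{R}(X)=\frac{X+X^*}{2}$, $\mathcal{I}(X)=\frac{X-X^*}{2i}$. $\mathcal{D}$ is the closed unit disc in $\mathbb{C}$, $\mathcal{D'}=\mathcal{D}\setminus\{0\}$. $w_q(T)=\sup\{|\langle Tx,y\rangle| : \|x\|=\|y\|=1,\ \langle x,y\rangle=q\}$. *)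

theory Defs
  imports "HOL-Analysis.Analysis"
begin

class scaleC =
  fixes scaleC :: "complex \<Rightarrow> 'a \<Rightarrow> 'a" (infixr \<open>*\<^sub>C\<close> 75)

class complex_vector = scaleC + ab_group_add +
  assumes scaleC_add_right: "a *\<^sub>C (x + y) = a *\<^sub>C x + a *\<^sub>C y"
    and scaleC_add_left: "(a + b) *\<^sub>C x = a *\<^sub>C x + b *\<^sub>C x"
    and scaleC_scaleC: "a *\<^sub>C (b *\<^sub>C x) = (a * b) *\<^sub>C x"
    and scaleC_one: "1 *\<^sub>C x = x"

text \<open>Complex inner product, linear in the first argument and conjugate linear in the
  second; the real normed structure is the one induced by it.\<close>
class complex_inner = complex_vector + real_normed_vector +
  fixes cinner :: "'a \<Rightarrow> 'a \<Rightarrow> complex"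
  assumes scaleR_scaleC: "scaleR r x = complex_of_real r *\<^sub>C x"
    and cinner_cnj: "cinner y x = cnj (cinner x y)"
    and cinner_add_left: "cinner (x + y) z = cinner x z + cinner y z"
    and cinner_scaleC_left: "cinner (c *\<^sub>C x) y = c * cinner x y"
    and cinner_ge_zero: "0 \<le> Re (cinner x x)"
    and cinner_eq_zero_iff: "cinner x x = 0 \<longleftrightarrow> x = 0"
    and norm_eq_sqrt_cinner: "norm x = sqrt (Re (cinner x x))"

class chilbert_space = complex_inner + complete_space

instantiation prod :: (complex_vector, complex_vector) complex_vector
begin
definition scaleC_prod_def: "c *\<^sub>C x = (c *\<^sub>C fst x, c *\<^sub>C snd x)"
instance
  by standard (auto simp: scaleC_prod_def scaleC_add_right scaleC_add_left scaleC_scaleC scaleC_one)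
end

instantiation prod :: (complex_inner, complex_inner) complex_inner
begin
definition cinner_prod_def: "cinner x y = cinner (fst x) (fst y) + cinner (snd x) (snd y)"

lemma cinner_self_Re: "Re (cinner (x::'c::complex_inner) x) = (norm x)\<^sup>2"
  using norm_eq_sqrt_cinner[of x] cinner_ge_zero[of x] by simp

instance
proof
  fix r :: real and x :: "'a \<times> 'b"
  show "scaleR r x = complex_of_real r *\<^sub>C x"
    by (simp add: scaleC_prod_def scaleR_scaleC scaleR_prod_def)
next
  fix x y :: "'a \<times> 'b"
  show "cinner y x = cnj (cinner x y)"
    by (simp add: cinner_prod_def cinner_cnj[of "fst x"] cinner_cnj[of "snd x"])
next
  fix x y z :: "'a \<times> 'b"
  show "cinner (x + y) z = cinner x z + cinner y z"
    by (simp add: cinner_prod_def cinner_add_left)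
next
  fix c :: complex and x y :: "'a \<times> 'b"
  show "cinner (c *\<^sub>C x) y = c * cinner x y"
    by (simp add: cinner_prod_def scaleC_prod_def cinner_scaleC_left distrib_left)
next
  fix x :: "'a \<times> 'b"
  show "0 \<le> Re (cinner x x)"
    by (simp add: cinner_prod_def cinner_self_Re)
next
  fix x :: "'a \<times> 'b"
  have im1: "Im (cinner (fst x) (fst x)) = 0"
    using cinner_cnj[of "fst x" "fst x"] by (metis cnj.sel(2) equal_neg_zero)
  have im2: "Im (cinner (snd x) (snd x)) = 0"
    using cinner_cnj[of "snd x" "snd x"] by (metis cnj.sel(2) equal_neg_zero)
  show "cinner x x = 0 \<longleftrightarrow> x = 0"
  proof
    assume h: "cinner x x = 0"
    hence "(norm (fst x))\<^sup>2 + (norm (snd x))\<^sup>2 = 0"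
      by (metis cinner_prod_def cinner_self_Re plus_complex.sel(1) zero_complex.sel(1))
    hence "fst x = 0" "snd x = 0"
      by (simp_all add: add_nonneg_eq_0_iff)
    thus "x = 0" by (simp add: prod_eq_iff)
  qed (simp add: cinner_prod_def cinner_eq_zero_iff[THEN iffD2])
next
  fix x :: "'a \<times> 'b"
  show "norm x = sqrt (Re (cinner x x))"
    by (simp add: norm_prod_def cinner_prod_def cinner_self_Re)
qed
end

definition bounded_clinear :: "('a::complex_inner \<Rightarrow> 'b::complex_inner) \<Rightarrow> bool" where
  "bounded_clinear f \<longleftrightarrow>
     (\<forall>x y. f (x + y) = f x + f y) \<and> (\<forall>c x. f (c *\<^sub>C x) = c *\<^sub>C f x) \<and>
     (\<exists>K. \<forall>x. norm (f x) \<le> norm x * K)"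

text \<open>Operator norm of a bounded operator: the library's \<open>onorm\<close>.\<close>

definition cadjoint :: "('a::complex_inner \<Rightarrow> 'a) \<Rightarrow> ('a \<Rightarrow> 'a)" where
  "cadjoint X = (THE Y. \<forall>x y. cinner (X x) y = cinner x (Y y))"

definition ReOp :: "('a::complex_inner \<Rightarrow> 'a) \<Rightarrow> ('a \<Rightarrow> 'a)" where
  "ReOp X = (\<lambda>x. (1/2) *\<^sub>C (X x + cadjoint X x))"

definition ImOp :: "('a::complex_inner \<Rightarrow> 'a) \<Rightarrow> ('a \<Rightarrow> 'a)" where
  "ImOp X = (\<lambda>x. (1/(2*\<i>)) *\<^sub>C (X x - cadjoint X x))"

definition offdiag :: "('a \<Rightarrow> 'a) \<Rightarrow> ('a \<times> 'a \<Rightarrow> 'a \<times> 'a)" where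
  "offdiag X = (\<lambda>(x1, x2). (X x2, X x1))"

text \<open>q-numerical radius. The value 0 is included so that the supremum of the empty
  set (trivial space) is 0; all elements are nonnegative anyway.\<close>
definition wq :: "complex \<Rightarrow> ('a::complex_inner \<Rightarrow> 'a) \<Rightarrow> real" where
  "wq q T = Sup (insert 0 {cmod (cinner (T x) y) | x y.
                   norm x = 1 \<and> norm y = 1 \<and> cinner x y = q})"

end

theory Submission
  imports Defs
begin


lemma cinner_add_right: "cinner x (y + z) = cinner x y + cinner x z"
  by (metis cinner_add_left cinner_cnj complex_cnj_add)

lemma cinner_scaleC_right: "cinner x (c *\<^sub>C y) = cnj c * cinner x y"
  by (metis cinner_scaleC_left cinner_cnj complex_cnj_mult complex_cnj_cnj)

lemma cinner_zero_left[simp]: "cinner 0 x = 0"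
  using cinner_add_left[of 0 0 x] by simp

lemma cinner_zero_right[simp]: "cinner x 0 = 0"
  using cinner_add_right[of x 0 0] by simp

lemma cinner_minus_left: "cinner (- x) y = - cinner x y"
  using cinner_add_left[of x "-x" y] by (simp add: add_eq_0_iff)

lemma cinner_minus_right: "cinner x (- y) = - cinner x y"
  using cinner_add_right[of x y "-y"] by (simp add: add_eq_0_iff)

lemma cinner_diff_left: "cinner (x - y) z = cinner x z - cinner y z"
  using cinner_add_left[of x "-y" z] by (simp add: cinner_minus_left)

lemma cinner_diff_right: "cinner x (y - z) = cinner x y - cinner x z"
  using cinner_add_right[of x y "-z"] by (simp add: cinner_minus_right)

lemma cinner_self: fixes x y a b :: "'a::complex_inner" shows "cinner x x = complex_of_real ((norm x)\<^sup>2)"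
proof -
  have "Im (cinner x x) = 0"
    using cinner_cnj[of x x] by (metis cnj.sel(2) equal_neg_zero)
  moreover have "Re (cinner x x) = (norm x)\<^sup>2"
    using norm_eq_sqrt_cinner[of x] cinner_ge_zero[of x] by simp
  ultimately show ?thesis by (simp add: complex_eq_iff)
qed

lemma scaleC_zero_left[simp]: "(0::complex) *\<^sub>C (x::'a::complex_vector) = 0"
  using scaleC_add_left[of 0 0 x] by simp

lemma scaleC_zero_right[simp]: "c *\<^sub>C (0::'a::complex_vector) = 0"
  using scaleC_add_right[of c 0 0] by simp

lemma scaleC_minus_right: "c *\<^sub>C (- x) = - (c *\<^sub>C (x::'a::complex_vector))"
  using scaleC_add_right[of c x "-x"] by (simp add: add_eq_0_iff)

lemma scaleC_diff_right: "c *\<^sub>C (x - y) = c *\<^sub>C x - c *\<^sub>C (y::'a::complex_vector)"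
  using scaleC_add_right[of c x "-y"] by (simp add: scaleC_minus_right)

lemma norm_scaleC: fixes x y a b :: "'a::complex_inner" shows "norm (c *\<^sub>C x) = cmod c * norm x"
proof -
  have "(norm (c *\<^sub>C x))\<^sup>2 = (cmod c * norm x)\<^sup>2"
  proof -
    have "complex_of_real ((norm (c *\<^sub>C x))\<^sup>2) = cinner (c *\<^sub>C x) (c *\<^sub>C x)"
      by (simp add: cinner_self)
    also have "\<dots> = (c * cnj c) * cinner x x"
      by (simp add: cinner_scaleC_left cinner_scaleC_right)
    also have "\<dots> = complex_of_real ((cmod c * norm x)\<^sup>2)"
      by (simp only: cinner_self complex_norm_square[symmetric] of_real_mult[symmetric] power_mult_distrib)
    finally show ?thesis by (simp only: of_real_eq_iff)
  qed
  thus ?thesis by (simp add: power2_eq_iff_nonneg)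
qed

lemma cinner_ext_left: fixes x y a b :: "'a::complex_inner" assumes "\<And>w. cinner a w = cinner b w" shows "a = b"
proof -
  have "cinner (a - b) (a - b) = 0" using assms[of "a-b"] by (simp add: cinner_diff_left)
  thus ?thesis by (simp add: cinner_eq_zero_iff)
qed

lemma cinner_ext_right: fixes x y a b :: "'a::complex_inner" assumes "\<And>w. cinner w a = cinner w b" shows "a = b"
  using assms by (intro cinner_ext_left) (metis cinner_cnj)

lemma norm_add_sq: fixes x y a b :: "'a::complex_inner" shows "(norm (x + y))\<^sup>2 = (norm x)\<^sup>2 + 2 * Re (cinner x y) + (norm y)\<^sup>2"
proof -
  have "cinner (x+y) (x+y) = cinner x x + cinner x y + cinner y x + cinner y y"
    by (simp add: cinner_add_left cinner_add_right)
  hence "complex_of_real ((norm (x + y))\<^sup>2) = cinner x x + cinner x y + cinner y x + cinner y y"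
    by (simp only: cinner_self)
  hence "(norm (x + y))\<^sup>2 = Re (cinner x x + cinner x y + cinner y x + cinner y y)"
    by (metis Re_complex_of_real)
  also have "\<dots> = (norm x)\<^sup>2 + 2 * Re (cinner x y) + (norm y)\<^sup>2"
    using cinner_cnj[of y x] by (simp add: cinner_self)
  finally show ?thesis .
qed

lemma norm_diff_sq: fixes x y a b :: "'a::complex_inner" shows "(norm (x - y))\<^sup>2 = (norm x)\<^sup>2 - 2 * Re (cinner x y) + (norm y)\<^sup>2"
  using norm_add_sq[of x "-y"] by (simp add: cinner_minus_right)

lemma parallelogram: fixes x y a b :: "'a::complex_inner" shows "(norm (x + y))\<^sup>2 + (norm (x - y))\<^sup>2 = 2 * (norm x)\<^sup>2 + 2 * (norm y)\<^sup>2"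
  using norm_add_sq[of x y] norm_diff_sq[of x y] by simp

lemma cauchy_schwarz: fixes x y a b :: "'a::complex_inner" shows "cmod (cinner x y) \<le> norm x * norm y"
proof (cases "y = 0")
  case True thus ?thesis by simp
next
  case False
  define N where "N = (norm y)\<^sup>2"
  have N: "N > 0" using False by (simp add: N_def)
  define c where "c = cinner x y / complex_of_real N"
  have "0 \<le> (norm (x - c *\<^sub>C y))\<^sup>2" by simp
  also have "\<dots> = (norm x)\<^sup>2 - 2 * Re (cinner x (c *\<^sub>C y)) + (cmod c)\<^sup>2 * N"
    by (simp add: norm_diff_sq norm_scaleC N_def power_mult_distrib)
  also have "\<dots> = (norm x)\<^sup>2 - (cmod (cinner x y))\<^sup>2 / N"
  proof -
    have "cinner x (c *\<^sub>C y) = cnj (cinner x y) * cinner x y / N"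
      by (simp add: cinner_scaleC_right c_def)
    also have "cnj (cinner x y) * cinner x y = complex_of_real ((cmod (cinner x y))\<^sup>2)"
      by (metis complex_norm_square mult.commute)
    finally have "Re (cinner x (c *\<^sub>C y)) = Re (complex_of_real ((cmod (cinner x y))\<^sup>2) / complex_of_real N)" by simp
    hence "Re (cinner x (c *\<^sub>C y)) = (cmod (cinner x y))\<^sup>2 / N"
      by (simp only: Re_divide_of_real Re_complex_of_real)
    moreover have "(cmod c)\<^sup>2 * N = (cmod (cinner x y))\<^sup>2 / N"
      using N by (simp add: c_def norm_divide power_divide power2_eq_square)
    ultimately show ?thesis by simp
  qed
  finally have "(cmod (cinner x y))\<^sup>2 \<le> (norm x)\<^sup>2 * N" using N by (simp add: field_simps)
  hence "(cmod (cinner x y))\<^sup>2 \<le> (norm x * norm y)\<^sup>2" by (simp add: N_def power_mult_distrib)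
  thus ?thesis by (simp add: power2_le_iff_abs_le)
qed



lemma cnj_sgn_mult: "cnj (sgn z) * z = complex_of_real (cmod z)"
proof (cases "z = 0")
  case True thus ?thesis by simp
next
  case False
  have "cnj (sgn z) * z = cnj z * z / complex_of_real (cmod z)"
    by (simp add: sgn_div_norm scaleR_conv_of_real divide_inverse mult_ac)
  also have "cnj z * z = complex_of_real ((cmod z)\<^sup>2)"
    by (metis complex_norm_square mult.commute)
  finally show ?thesis using False by (simp add: power2_eq_square)
qed

lemma inv_mono_suc: "N \<le> m \<Longrightarrow> inverse (real (Suc m)) \<le> inverse (real (Suc N))"
  by (rule le_imp_inverse_le) auto

lemma four_two: "4 * ((2 * (x::real)) / s) = 8 * x / s"
  by simp

lemma aux8:
  fixes s e :: real
  assumes "0 < s" "0 < e" "8 / (s * e) < real N"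
  shows "8 * inverse (real (Suc N)) / s < e"
proof -
  have "8 < real N * (s * e)" using assms by (simp add: divide_less_eq mult.commute)
  moreover have "0 < s * e" using assms by simp
  ultimately have h: "8 < real (Suc N) * (s * e)" by (simp add: distrib_right)
  have "8 * inverse (real (Suc N)) / s = 8 / (real (Suc N) * s)" by (simp add: divide_inverse)
  also have "\<dots> < e" using h assms by (simp add: pos_divide_less_eq mult.commute mult.left_commute)
  finally show ?thesis .
qed

lemma riesz:
  fixes f :: "'a::chilbert_space \<Rightarrow> complex"
  assumes add: "\<And>x y. f (x + y) = f x + f y"
    and sc: "\<And>c x. f (c *\<^sub>C x) = c * f x"
    and bd: "\<And>x. cmod (f x) \<le> norm x * K"
  shows "\<exists>u. \<forall>x. f x = cinner x u"
proof (cases "\<forall>x. f x = 0")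
  case True thus ?thesis by (intro exI[of _ 0]) simp
next
  case False
  then obtain x0 where x0: "f x0 \<noteq> 0" by blast
  have fR: "f (r *\<^sub>R x) = complex_of_real r * f x" for r x
    by (simp add: scaleR_scaleC sc)
  have f0: "f 0 = 0" using add[of 0 0] by simp
  have blin: "bounded_linear f"
    by (rule bounded_linear_intro[where K=K]) (auto simp: add fR bd scaleR_conv_of_real)
  define S where "S = {cmod (f x) | x. norm x \<le> 1}"
  define s where "s = Sup S"
  have bdd: "bdd_above S"
  proof (rule bdd_aboveI[where M="\<bar>K\<bar>"])
    fix r assume "r \<in> S"
    then obtain x where "r = cmod (f x)" "norm x \<le> 1" by (auto simp: S_def)
    moreover have "norm x * K \<le> \<bar>K\<bar>"
      using \<open>norm x \<le> 1\<close> by (metis abs_ge_self abs_mult abs_norm_cancel mult_le_cancel_right2 norm_ge_zero order_trans abs_ge_zero mult_left_le_one_le)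
    ultimately show "r \<le> \<bar>K\<bar>" using bd[of x] by linarith
  qed
  have Sne: "S \<noteq> {}" by (auto simp: S_def intro!: exI[of _ 0])
  have s_upper: "cmod (f x) \<le> s" if "norm x \<le> 1" for x
    unfolding s_def using that by (intro cSup_upper bdd) (auto simp: S_def)
  have s_bound: "cmod (f x) \<le> s * norm x" for x
  proof (cases "x = 0")
    case True thus ?thesis by (simp add: f0)
  next
    case False
    hence nx: "norm x > 0" by simp
    have "cmod (f ((1 / norm x) *\<^sub>R x)) \<le> s" by (rule s_upper) (simp add: False)
    hence "cmod (f x) / norm x \<le> s" by (simp add: fR norm_mult norm_divide)
    thus ?thesis using nx by (simp add: field_simps)
  qed
  have s_pos: "s > 0"
  proof -
    have "0 < cmod (f x0)" using x0 by simp
    also have "\<dots> \<le> s * norm x0" by (rule s_bound)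
    finally show ?thesis by (simp add: zero_less_mult_iff)
  qed
  have approx: "\<exists>x. norm x \<le> 1 \<and> s - e < cmod (f x)" if "e > 0" for e
  proof -
    have "s - e < Sup S" using that by (simp add: s_def)
    then obtain r where "r \<in> S" "s - e < r" using less_cSup_iff[OF Sne bdd] by blast
    thus ?thesis by (auto simp: S_def)
  qed
  define ee :: "nat \<Rightarrow> real" where "ee n = inverse (real (Suc n))" for n
  have ee_pos: "ee n > 0" for n by (simp add: ee_def)
  have "\<forall>n. \<exists>x. norm x \<le> 1 \<and> s - ee n < cmod (f x)" using approx ee_pos by blast
  then obtain xs where xs: "\<And>n. norm (xs n) \<le> 1" "\<And>n. s - ee n < cmod (f (xs n))" by metis
  define y where "y n = cnj (sgn (f (xs n))) *\<^sub>C xs n" for n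
  define g where "g n = cmod (f (xs n))" for n
  have fy: "f (y n) = complex_of_real (g n)" for n
    by (simp add: y_def g_def sc cnj_sgn_mult)
  have ny: "norm (y n) \<le> 1" for n
  proof -
    have "norm (y n) = cmod (sgn (f (xs n))) * norm (xs n)" by (simp add: y_def norm_scaleC)
    also have "\<dots> \<le> 1 * 1" using xs(1)[of n] by (intro mult_mono) (auto simp: norm_sgn)
    finally show ?thesis by simp
  qed
  have g_lo: "s - ee n < g n" and g_hi: "g n \<le> s" for n
    using xs s_upper by (auto simp: g_def)
  have key: "(norm (y m - y n))\<^sup>2 \<le> 4 * ((ee m + ee n) / s)" for m n
  proof -
    define d where "d = (ee m + ee n) / s"
    have d_pos: "d > 0" using ee_pos s_pos by (simp add: d_def add_pos_pos)
    have "g m + g n = cmod (f (y m + y n))"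
      using fy add by (simp add: g_def of_real_add[symmetric] del: of_real_add)
    also have "\<dots> \<le> s * norm (y m + y n)" by (rule s_bound)
    finally have "2 * s - (ee m + ee n) \<le> s * norm (y m + y n)"
      using g_lo[of m] g_lo[of n] by linarith
    moreover have "s * (2 - d) = 2 * s - (ee m + ee n)" using s_pos by (simp add: d_def field_simps)
    ultimately have "s * (2 - d) \<le> s * norm (y m + y n)" by linarith
    hence lo: "2 - d \<le> norm (y m + y n)" using s_pos by simp
    have par: "(norm (y m - y n))\<^sup>2 = 2 * (norm (y m))\<^sup>2 + 2 * (norm (y n))\<^sup>2 - (norm (y m + y n))\<^sup>2"
      using parallelogram[of "y m" "y n"] by simp
    have "(norm (y m))\<^sup>2 \<le> 1" "(norm (y n))\<^sup>2 \<le> 1"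
      using ny[of m] ny[of n] by (simp_all add: power_le_one)
    hence up: "(norm (y m - y n))\<^sup>2 \<le> 4 - (norm (y m + y n))\<^sup>2" using par by linarith
    show ?thesis
    proof (cases "d \<le> 2")
      case True
      hence "(2 - d)\<^sup>2 \<le> (norm (y m + y n))\<^sup>2" using lo by (intro power_mono) auto
      hence "(norm (y m - y n))\<^sup>2 \<le> 4 * d - d\<^sup>2" using up by (simp add: power2_eq_square algebra_simps)
      thus ?thesis using d_pos by (simp add: d_def[symmetric]) (smt (verit) zero_le_power2)
    next
      case False
      thus ?thesis using up d_pos by (simp add: d_def[symmetric]) (smt (verit) zero_le_power2)
    qed
  qed
  have "Cauchy y"
  proof (rule metric_CauchyI)
    fix \<epsilon> :: real assume ep: "\<epsilon> > 0"
    obtain N :: nat where N: "8 / (s * \<epsilon>\<^sup>2) < real N" using reals_Archimedean2 by blast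
    have "\<forall>m\<ge>N. \<forall>n\<ge>N. dist (y m) (y n) < \<epsilon>"
    proof (intro allI impI)
      fix m n assume mn: "m \<ge> N" "n \<ge> N"
      have em: "ee m \<le> inverse (real (Suc N))" "ee n \<le> inverse (real (Suc N))"
        unfolding ee_def by (rule inv_mono_suc[OF mn(1)], rule inv_mono_suc[OF mn(2)])
      have "(norm (y m - y n))\<^sup>2 \<le> 4 * ((ee m + ee n) / s)" by (rule key)
      also have "\<dots> \<le> 4 * ((2 * inverse (real (Suc N))) / s)"
      proof -
        have "ee m + ee n \<le> 2 * inverse (real (Suc N))" using em by linarith
        from mult_left_mono[OF divide_right_mono[OF this less_imp_le[OF s_pos]], of 4]
        show ?thesis by simp
      qed
      also have "\<dots> = 8 * inverse (real (Suc N)) / s" by (rule four_two)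
      also have "\<dots> < \<epsilon>\<^sup>2"
        by (rule aux8[OF s_pos zero_less_power[OF ep, of 2] N])
      finally have "(norm (y m - y n))\<^sup>2 < \<epsilon>\<^sup>2" .
      hence "norm (y m - y n) < \<epsilon>" by (rule power_less_imp_less_base[OF _ less_imp_le[OF ep]])
      thus "dist (y m) (y n) < \<epsilon>" by (simp add: dist_norm)
    qed
    thus "\<exists>N. \<forall>m\<ge>N. \<forall>n\<ge>N. dist (y m) (y n) < \<epsilon>" by blast
  qed
  then obtain u0 where lim: "y \<longlonglongrightarrow> u0" using Cauchy_convergent_iff convergent_def by blast
  have "(\<lambda>n. f (y n)) \<longlonglongrightarrow> f u0" using blin lim by (rule bounded_linear.tendsto)
  moreover have "(\<lambda>n. f (y n)) \<longlonglongrightarrow> complex_of_real s"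
  proof -
    have "(\<lambda>n. s - ee n) \<longlonglongrightarrow> s - 0" unfolding ee_def
      by (intro tendsto_intros LIMSEQ_inverse_real_of_nat)
    moreover have "eventually (\<lambda>n. s - ee n \<le> g n) sequentially"
      by (rule always_eventually) (simp add: less_imp_le[OF g_lo])
    moreover have "eventually (\<lambda>n. g n \<le> s) sequentially"
      by (rule always_eventually) (simp add: g_hi)
    ultimately have "g \<longlonglongrightarrow> s"
      using tendsto_sandwich[where f="\<lambda>n. s - ee n" and g=g and h="\<lambda>n. s" and c=s] by simp
    hence "(\<lambda>n. complex_of_real (g n)) \<longlonglongrightarrow> complex_of_real s" by (rule tendsto_of_real)
    thus ?thesis by (simp add: fy)
  qed
  ultimately have fu0: "f u0 = complex_of_real s" by (rule LIMSEQ_unique)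
  have "norm u0 \<le> 1"
    using tendsto_norm[OF lim] by (rule LIMSEQ_le_const2) (auto intro: ny)
  moreover have "s \<le> s * norm u0" using s_bound[of u0] s_pos by (simp add: fu0)
  ultimately have nu0: "norm u0 = 1" using s_pos by simp
  have var: "Re (f h) \<le> s * Re (cinner h u0)" for h
  proof -
    define R where "R = Re (f h)"
    define P where "P = Re (cinner h u0)"
    define H where "H = (norm h)\<^sup>2"
    have step: "R \<le> s * P + t * (s * H / 2)" if t: "t > 0" for t
    proof -
      define v where "v = u0 + t *\<^sub>R h"
      have "f v = complex_of_real s + complex_of_real t * f h" by (simp add: v_def add fR fu0)
      hence "s + t * R = Re (f v)" by (simp add: R_def)
      also have "\<dots> \<le> cmod (f v)" by (rule complex_Re_le_cmod)
      also have "\<dots> \<le> s * norm v" by (rule s_bound)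
      finally have A: "s + t * R \<le> s * norm v" .
      have ip: "Re (cinner u0 (t *\<^sub>R h)) = t * P"
      proof -
        have "cinner u0 (t *\<^sub>R h) = complex_of_real t * cinner u0 h"
          by (simp add: scaleR_scaleC cinner_scaleC_right)
        moreover have "Re (cinner u0 h) = P" unfolding P_def
          by (metis cinner_cnj complex_cnj_cnj cnj.sel(1))
        ultimately show ?thesis by simp
      qed
      have "(norm v)\<^sup>2 = 1 + 2 * (t * P) + t\<^sup>2 * H"
        unfolding v_def norm_add_sq ip using nu0 by (simp add: H_def power_mult_distrib)
      moreover have "2 * norm v \<le> (norm v)\<^sup>2 + 1"
        using sum_squares_bound[of "norm v" 1] by (simp add: power2_eq_square)
      ultimately have "norm v \<le> 1 + t * P + t\<^sup>2 * H / 2" by simp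
      hence "s * norm v \<le> s * (1 + t * P + t\<^sup>2 * H / 2)" using s_pos by simp
      with A have "t * R \<le> t * (s * P + t * (s * H / 2))" by (simp add: algebra_simps power2_eq_square)
      thus ?thesis using t by simp
    qed
    have "R \<le> s * P"
    proof (rule field_le_epsilon)
      fix e :: real assume e: "e > 0"
      have Hn: "s * H / 2 \<ge> 0" using s_pos by (simp add: H_def)
      define t where "t = e / (s * H / 2 + 1)"
      have tpos: "t > 0" using e Hn by (simp add: t_def)
      have "t * (s * H / 2) \<le> e" using e Hn by (simp add: t_def field_simps)
      thus "R \<le> s * P + e" using step[OF tpos] by linarith
    qed
    thus ?thesis by (simp add: R_def P_def)
  qed
  have ReEq: "Re (f h) = s * Re (cinner h u0)" for h
  proof -
    have "Re (f (- h)) \<le> s * Re (cinner (- h) u0)" by (rule var)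
    moreover have "f (- h) = - f h" using fR[of "-1" h] by simp
    ultimately have "- Re (f h) \<le> - (s * Re (cinner h u0))" by (simp add: cinner_minus_left)
    with var[of h] show ?thesis by linarith
  qed
  have ImEq: "Im (f h) = s * Im (cinner h u0)" for h
  proof -
    have "Re (f ((- \<i>) *\<^sub>C h)) = s * Re (cinner ((- \<i>) *\<^sub>C h) u0)" by (rule ReEq)
    thus ?thesis by (simp add: sc cinner_scaleC_left)
  qed
  show ?thesis
  proof (intro exI allI)
    fix x
    have "cinner x (complex_of_real s *\<^sub>C u0) = complex_of_real s * cinner x u0"
      by (simp add: cinner_scaleC_right)
    thus "f x = cinner x (complex_of_real s *\<^sub>C u0)"
      by (simp add: complex_eq_iff ReEq ImEq)
  qed
qed



lemma bcl_add: "bounded_clinear X \<Longrightarrow> X (x + y) = X x + X y"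
  by (simp add: bounded_clinear_def)
lemma bcl_sc: "bounded_clinear X \<Longrightarrow> X (c *\<^sub>C x) = c *\<^sub>C X x"
  by (simp add: bounded_clinear_def)
lemma bcl_bd: "bounded_clinear X \<Longrightarrow> \<exists>K. \<forall>x. norm (X x) \<le> norm x * K"
  by (simp add: bounded_clinear_def)
lemma bcl_zero: "bounded_clinear X \<Longrightarrow> X 0 = 0"
  using bcl_add[of X 0 0] by simp
lemma bcl_minus: "bounded_clinear X \<Longrightarrow> X (- x) = - X x"
  using bcl_add[of X x "-x"] bcl_zero[of X] by (simp add: add_eq_0_iff)
lemma bcl_diff: "bounded_clinear X \<Longrightarrow> X (x - y) = X x - X y"
  using bcl_add[of X x "-y"] bcl_minus[of X y] by simp
lemma bcl_scR: "bounded_clinear X \<Longrightarrow> X (r *\<^sub>R x) = r *\<^sub>R X x"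
  by (simp add: scaleR_scaleC bcl_sc)

lemma adjoint_exists:
  fixes X :: "'a::chilbert_space \<Rightarrow> 'a"
  assumes X: "bounded_clinear X"
  shows "\<exists>Y. \<forall>x y. cinner (X x) y = cinner x (Y y)"
proof -
  obtain K where K: "\<And>x. norm (X x) \<le> norm x * K" using bcl_bd[OF X] by blast
  have "\<exists>u. \<forall>x. cinner (X x) y = cinner x u" for y
  proof (rule riesz[where K="K * norm y"])
    show "cinner (X (a + b)) y = cinner (X a) y + cinner (X b) y" for a b
      by (simp add: bcl_add[OF X] cinner_add_left)
    show "cinner (X (c *\<^sub>C a)) y = c * cinner (X a) y" for c a
      by (simp add: bcl_sc[OF X] cinner_scaleC_left)
    show "cmod (cinner (X a) y) \<le> norm a * (K * norm y)" for a
    proof -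
      have "cmod (cinner (X a) y) \<le> norm (X a) * norm y" by (rule cauchy_schwarz)
      also have "\<dots> \<le> norm a * K * norm y" using K[of a] by (simp add: mult_right_mono)
      finally show ?thesis by (simp add: mult.assoc)
    qed
  qed
  thus ?thesis by metis
qed

lemma adj:
  fixes X :: "'a::chilbert_space \<Rightarrow> 'a"
  assumes X: "bounded_clinear X"
  shows "cinner (X x) y = cinner x (cadjoint X y)"
proof -
  have "\<exists>!Y. \<forall>x y. cinner (X x) y = cinner x (Y y)"
  proof (rule ex_ex1I)
    show "\<exists>Y. \<forall>x y. cinner (X x) y = cinner x (Y y)" by (rule adjoint_exists[OF X])
  next
    fix Y1 Y2 assume 1: "\<forall>x y. cinner (X x) y = cinner x (Y1 y)"
      and 2: "\<forall>x y. cinner (X x) y = cinner x (Y2 y)"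
    show "Y1 = Y2"
    proof
      fix y show "Y1 y = Y2 y" by (rule cinner_ext_right) (metis 1 2)
    qed
  qed
  hence "\<forall>x y. cinner (X x) y = cinner x (cadjoint X y)"
    unfolding cadjoint_def by (rule theI')
  thus ?thesis by blast
qed

lemma adj_left:
  fixes X :: "'a::chilbert_space \<Rightarrow> 'a"
  assumes X: "bounded_clinear X"
  shows "cinner (cadjoint X x) y = cnj (cinner (X y) x)"
  by (metis adj[OF X] cinner_cnj)

lemma ReOp_inner:
  fixes X :: "'a::chilbert_space \<Rightarrow> 'a"
  assumes X: "bounded_clinear X"
  shows "cinner (ReOp X x) y = (1 * cinner (X x) y + cnj (1 * cinner (X y) x)) / 2"
  by (simp add: ReOp_def cinner_scaleC_left cinner_add_left adj_left[OF X])

lemma ImOp_inner: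
  fixes X :: "'a::chilbert_space \<Rightarrow> 'a"
  assumes X: "bounded_clinear X"
  shows "cinner (ImOp X x) y = ((- \<i>) * cinner (X x) y + cnj ((- \<i>) * cinner (X y) x)) / 2"
proof -
  have "cinner (ImOp X x) y = (cinner (X x) y - cnj (cinner (X y) x)) / (2 * \<i>)"
    by (simp add: ImOp_def cinner_scaleC_left cinner_diff_left adj_left[OF X])
  also have "\<dots> = ((- \<i>) * cinner (X x) y + cnj ((- \<i>) * cinner (X y) x)) / 2"
    by (simp add: field_simps)
  finally show ?thesis .
qed

lemma gen_bound:
  fixes X A :: "'a::complex_inner \<Rightarrow> 'a"
  assumes X: "bounded_clinear X"
    and A: "\<And>x y. cinner (A x) y = (c * cinner (X x) y + cnj (c * cinner (X y) x)) / 2"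
    and c: "cmod c = 1"
    and M: "\<And>z. cmod (cinner (X z) z) \<le> M * (norm z)\<^sup>2"
    and M0: "0 \<le> M"
  shows "bounded_linear A" "onorm A \<le> M"
proof -
  have Re_bound: "Re (cinner (A x) y) \<le> M / 2 * ((norm x)\<^sup>2 + (norm y)\<^sup>2)" for x y
  proof -
    define P where "P = cinner (X (x + y)) (x + y)"
    define Q where "Q = cinner (X (x - y)) (x - y)"
    have e1: "P = cinner (X x) x + cinner (X x) y + cinner (X y) x + cinner (X y) y"
      unfolding P_def by (simp add: bcl_add[OF X] cinner_add_left cinner_add_right)
    have e2: "Q = cinner (X x) x - cinner (X x) y - cinner (X y) x + cinner (X y) y"
      unfolding Q_def by (simp add: bcl_diff[OF X] cinner_diff_left cinner_diff_right)
    have e: "c * (P - Q) = 2 * (c * (cinner (X x) y + cinner (X y) x))"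
      unfolding e1 e2 by (simp add: algebra_simps)
    have "Re (cinner (A x) y) = Re (c * (cinner (X x) y + cinner (X y) x)) / 2"
      by (simp add: A distrib_left)
    also have "\<dots> = Re (c * (P - Q)) / 4"
      unfolding e by simp
    also have "\<dots> \<le> cmod (c * (P - Q)) / 4"
      using complex_Re_le_cmod by (rule divide_right_mono) simp
    also have "\<dots> \<le> (cmod P + cmod Q) / 4"
    proof -
      have "cmod (c * (P - Q)) \<le> cmod P + cmod Q"
        using norm_triangle_ineq4[of P Q] by (simp add: norm_mult c)
      thus ?thesis by (rule divide_right_mono) simp
    qed
    also have "\<dots> \<le> (M * (norm (x + y))\<^sup>2 + M * (norm (x - y))\<^sup>2) / 4"
      using add_mono[OF M[of "x+y"] M[of "x-y"]] unfolding P_def Q_def by (rule divide_right_mono) simp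
    also have "\<dots> = M * ((norm (x + y))\<^sup>2 + (norm (x - y))\<^sup>2) / 4"
      by (simp only: distrib_left)
    also have "\<dots> = M * (2 * (norm x)\<^sup>2 + 2 * (norm y)\<^sup>2) / 4"
      by (simp only: parallelogram)
    also have "\<dots> = M / 2 * ((norm x)\<^sup>2 + (norm y)\<^sup>2)"
      by (simp add: algebra_simps)
    finally show ?thesis .
  qed
  have A0: "A 0 = 0"
    by (rule cinner_ext_left) (simp add: A bcl_zero[OF X])
  have nb: "norm (A x) \<le> M * norm x" for x
  proof (cases "A x = 0")
    case True thus ?thesis using M0 by simp
  next
    case False
    show ?thesis
    proof (cases "x = 0")
      case True thus ?thesis using A0 by simp
    next
      case x0: False
      define y where "y = (norm x / norm (A x)) *\<^sub>R A x"
      have ny: "norm y = norm x" using False by (simp add: y_def)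
      have "cinner (A x) y = complex_of_real (norm x / norm (A x)) * complex_of_real ((norm (A x))\<^sup>2)"
        by (simp add: y_def scaleR_scaleC cinner_scaleC_right cinner_self)
      hence "Re (cinner (A x) y) = norm x * norm (A x)" using False by (simp add: power2_eq_square)
      with Re_bound[of x y] ny have "norm x * norm (A x) \<le> norm x * (M * norm x)"
        by (simp add: power2_eq_square mult_ac)
      thus ?thesis using x0 by simp
    qed
  qed
  have Aadd: "A (x + y) = A x + A y" for x y
    by (rule cinner_ext_left)
       (simp add: A cinner_add_left cinner_add_right bcl_add[OF X] distrib_left add_divide_distrib)
  have AscR: "A (r *\<^sub>R x) = r *\<^sub>R A x" for r x
    by (rule cinner_ext_left)
       (simp add: A scaleR_scaleC cinner_scaleC_left cinner_scaleC_right bcl_sc[OF X] algebra_simps)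
  show bl: "bounded_linear A"
    by (rule bounded_linear_intro[where K=M]) (auto simp: Aadd AscR nb mult.commute)
  show "onorm A \<le> M"
    by (rule onorm_bound[OF M0]) (rule nb)
qed



lemma cmod_par: "(cmod (w + complex_of_real s))\<^sup>2 + (cmod (w - complex_of_real s))\<^sup>2 = 2 * (cmod w)\<^sup>2 + 2 * s\<^sup>2"
  unfolding cmod_power2 by (simp add: power2_eq_square algebra_simps)

lemma construct:
  fixes X :: "'a::chilbert_space \<Rightarrow> 'a"
  assumes X: "bounded_clinear X" and nz: "norm z = 1" and q: "cmod q \<le> 1"
  shows "\<exists>x y. norm x = 1 \<and> norm y = 1 \<and> cinner x y = q \<and>
           cinner (offdiag X x) y = q * cinner (X z) z"
proof -
  define r where "r = 1 / sqrt 2"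
  define s where "s = sqrt (1 - (cmod q)\<^sup>2)"
  have r2: "r\<^sup>2 = 1 / 2" by (simp add: r_def power_divide)
  have s2: "s\<^sup>2 = 1 - (cmod q)\<^sup>2"
  proof -
    have "(cmod q)\<^sup>2 \<le> 1" using q by (simp add: power_le_one)
    thus ?thesis unfolding s_def by simp
  qed
  define rc where "rc = complex_of_real r"
  have rcrc: "rc * rc = 1 / 2"
  proof -
    have "rc * rc = complex_of_real (r\<^sup>2)" by (simp add: rc_def power2_eq_square)
    thus ?thesis using r2 by simp
  qed
  define a where "a = rc * (cnj q + complex_of_real s)"
  define b where "b = rc * (cnj q - complex_of_real s)"
  have ca: "cnj a = rc * (q + complex_of_real s)" by (simp add: a_def rc_def)
  have cb: "cnj b = rc * (q - complex_of_real s)" by (simp add: b_def rc_def)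
  have zz: "cinner z z = 1" using nz by (simp add: cinner_self)
  define x where "x = (rc *\<^sub>C z, rc *\<^sub>C z)"
  define y where "y = (a *\<^sub>C z, b *\<^sub>C z)"
  have nx: "norm x = 1"
  proof -
    have "norm x = sqrt (r\<^sup>2 + r\<^sup>2)" by (simp add: x_def norm_Pair norm_scaleC nz rc_def)
    thus ?thesis using r2 by simp
  qed
  have ny: "norm y = 1"
  proof -
    have "norm y = sqrt ((cmod a)\<^sup>2 + (cmod b)\<^sup>2)" by (simp add: y_def norm_Pair norm_scaleC nz)
    also have "(cmod a)\<^sup>2 + (cmod b)\<^sup>2 = r\<^sup>2 * ((cmod (cnj q + complex_of_real s))\<^sup>2 + (cmod (cnj q - complex_of_real s))\<^sup>2)"
      unfolding a_def b_def norm_mult rc_def norm_of_real power_mult_distrib power2_abs by (simp only: distrib_left)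
    also have "\<dots> = 1" by (simp only: cmod_par r2 s2 complex_mod_cnj) simp
    finally show ?thesis by simp
  qed
  have sum: "rc * cnj a + rc * cnj b = q"
  proof -
    have "rc * cnj a + rc * cnj b = 2 * (rc * rc) * q" by (simp add: ca cb algebra_simps)
    thus ?thesis by (simp add: rcrc)
  qed
  have ip: "cinner x y = q"
  proof -
    have "cinner x y = rc * cnj a * cinner z z + rc * cnj b * cinner z z"
      by (simp add: x_def y_def cinner_prod_def cinner_scaleC_left cinner_scaleC_right)
    thus ?thesis using sum by (simp add: zz)
  qed
  have iT: "cinner (offdiag X x) y = q * cinner (X z) z"
  proof -
    have "offdiag X x = (rc *\<^sub>C X z, rc *\<^sub>C X z)"
      by (simp add: x_def offdiag_def bcl_sc[OF X])
    hence "cinner (offdiag X x) y = rc * (cnj a * cinner (X z) z) + rc * (cnj b * cinner (X z) z)"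
      by (simp add: y_def cinner_prod_def cinner_scaleC_left cinner_scaleC_right)
    also have "\<dots> = (rc * cnj a + rc * cnj b) * cinner (X z) z"
      by (simp only: distrib_right mult.assoc)
    finally show ?thesis by (simp only: sum)
  qed
  show ?thesis using nx ny ip iT by blast
qed

lemma dec_alg: "(1 * a + cnj (1 * b)) / 2 + \<i> * (((- \<i>) * a + cnj ((- \<i>) * b)) / 2) = (a::complex)"
  by (simp add: complex_eq_iff field_simps)
lemma maxl: "(c::real) / 2 * (a + b) + c / 2 * \<bar>a - b\<bar> = c * max a b"
proof -
  have "a + b + \<bar>a - b\<bar> = 2 * max a b" by arith
  hence "c / 2 * (a + b + \<bar>a - b\<bar>) = c * max a b" by simp
  thus ?thesis by (simp only: distrib_left)
qed
lemma bcl_absK: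
  assumes K: "\<And>x. norm (X x) \<le> norm x * K"
  shows "norm (X x) \<le> \<bar>K\<bar> * norm x"
proof -
  have "norm x * K \<le> norm x * \<bar>K\<bar>" by (rule mult_left_mono) auto
  thus ?thesis using K[of x] by (simp add: mult.commute)
qed

lemma offdiag_norm:
  fixes X :: "'a::complex_inner \<Rightarrow> 'a"
  assumes K: "\<And>x. norm (X x) \<le> \<bar>K\<bar> * norm x"
  shows "norm (offdiag X u) \<le> \<bar>K\<bar> * norm u"
proof -
  obtain u1 u2 where u: "u = (u1, u2)" by (cases u)
  have "(norm (X u2))\<^sup>2 \<le> (\<bar>K\<bar> * norm u2)\<^sup>2" using K[of u2] by (intro power_mono) auto
  moreover have "(norm (X u1))\<^sup>2 \<le> (\<bar>K\<bar> * norm u1)\<^sup>2" using K[of u1] by (intro power_mono) auto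
  moreover have "(\<bar>K\<bar> * norm u)\<^sup>2 = (\<bar>K\<bar> * norm u1)\<^sup>2 + (\<bar>K\<bar> * norm u2)\<^sup>2"
    by (simp add: u norm_Pair power_mult_distrib distrib_left)
  ultimately have h: "(norm (X u2))\<^sup>2 + (norm (X u1))\<^sup>2 \<le> (\<bar>K\<bar> * norm u)\<^sup>2"
    by linarith
  have "sqrt ((norm (X u2))\<^sup>2 + (norm (X u1))\<^sup>2) \<le> \<bar>K\<bar> * norm u"
    using real_sqrt_le_mono[OF h] by simp
  thus ?thesis by (simp add: u offdiag_def norm_Pair)
qed

theorem corollary3p8:
  fixes X :: "'a::chilbert_space \<Rightarrow> 'a" and q :: complex
  assumes "bounded_clinear X"
    and "q \<noteq> 0" and "cmod q \<le> 1"
  shows "wq q (offdiag X) \<ge>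
           cmod q / 2 * onorm X + cmod q / 2 * \<bar>onorm (ReOp X) - onorm (ImOp X)\<bar>"
proof -
  note X = assms(1)
  obtain K where K0: "\<And>x. norm (X x) \<le> norm x * K" using bcl_bd[OF X] by blast
  have K: "norm (X x) \<le> \<bar>K\<bar> * norm x" for x by (rule bcl_absK[OF K0])
  define W where "W = {cmod (cinner (offdiag X x) y) | x y. norm x = 1 \<and> norm y = 1 \<and> cinner x y = q}"
  have wqW: "wq q (offdiag X) = Sup (insert 0 W)" by (simp add: wq_def W_def)
  have bdd: "bdd_above (insert 0 W)"
  proof (rule bdd_aboveI[where M="\<bar>K\<bar>"])
    fix t assume "t \<in> insert 0 W"
    then consider "t = 0" | x y where "t = cmod (cinner (offdiag X x) y)" "norm x = 1" "norm y = 1"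
      by (auto simp: W_def)
    thus "t \<le> \<bar>K\<bar>"
    proof cases
      case 1 thus ?thesis by simp
    next
      case 2
      have "t \<le> norm (offdiag X x) * norm y" using 2 cauchy_schwarz[of "offdiag X x" y] by simp
      also have "\<dots> \<le> \<bar>K\<bar> * norm x" using 2 offdiag_norm[OF K, of x] by simp
      finally show ?thesis using 2 by simp
    qed
  qed
  have wq0: "0 \<le> wq q (offdiag X)" unfolding wqW by (rule cSup_upper[OF _ bdd]) simp
  have low: "cmod q * cmod (cinner (X z) z) \<le> wq q (offdiag X)" if nz: "norm z = 1" for z
  proof -
    obtain x y where xy: "norm x = 1" "norm y = 1" "cinner x y = q"
      "cinner (offdiag X x) y = q * cinner (X z) z"
      using construct[OF X nz assms(3)] by blast
    have e: "cmod q * cmod (cinner (X z) z) = cmod (cinner (offdiag X x) y)"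
      using xy(4) by (simp add: norm_mult)
    have "cmod q * cmod (cinner (X z) z) \<in> insert 0 W"
      unfolding W_def e using xy(1-3) by blast
    thus ?thesis unfolding wqW by (rule cSup_upper[OF _ bdd])
  qed
  have qpos: "cmod q > 0" using assms(2) by simp
  define M where "M = wq q (offdiag X) / cmod q"
  have M0: "0 \<le> M" using wq0 qpos by (simp add: M_def)
  have M1: "cmod (cinner (X z) z) \<le> M" if "norm z = 1" for z
    using low[OF that] qpos by (simp add: M_def pos_le_divide_eq mult.commute)
  have Mz: "cmod (cinner (X z) z) \<le> M * (norm z)\<^sup>2" for z
  proof (cases "z = 0")
    case True thus ?thesis by (simp add: bcl_zero[OF X])
  next
    case False
    define z' where "z' = (1 / norm z) *\<^sub>R z"
    have nz': "norm z' = 1" using False by (simp add: z'_def)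
    have "cinner (X z) z = complex_of_real ((norm z)\<^sup>2) * cinner (X z') z'"
    proof -
      have zz: "z = norm z *\<^sub>R z'" using False by (simp add: z'_def)
      have "cinner (X z) z = cinner (X (norm z *\<^sub>R z')) (norm z *\<^sub>R z')" using zz by simp
      also have "\<dots> = complex_of_real ((norm z)\<^sup>2) * cinner (X z') z'"
        by (simp add: bcl_sc[OF X] scaleR_scaleC cinner_scaleC_left cinner_scaleC_right power2_eq_square)
      finally show ?thesis .
    qed
    hence "cmod (cinner (X z) z) = (norm z)\<^sup>2 * cmod (cinner (X z') z')" by (simp add: norm_mult norm_power)
    also have "\<dots> \<le> (norm z)\<^sup>2 * M" using M1[OF nz'] by (intro mult_left_mono) auto
    finally show ?thesis by (simp add: mult.commute)
  qed
  have Re: "bounded_linear (ReOp X)" "onorm (ReOp X) \<le> M"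
    using gen_bound[OF X ReOp_inner[OF X] _ Mz M0] by simp_all
  have Im: "bounded_linear (ImOp X)" "onorm (ImOp X) \<le> M"
    using gen_bound[OF X ImOp_inner[OF X] _ Mz M0] by simp_all
  have dec: "X x = ReOp X x + \<i> *\<^sub>C ImOp X x" for x
  proof (rule cinner_ext_left)
    fix w
    show "cinner (X x) w = cinner (ReOp X x + \<i> *\<^sub>C ImOp X x) w"
      by (simp only: cinner_add_left cinner_scaleC_left ReOp_inner[OF X] ImOp_inner[OF X] dec_alg)
  qed
  define oa where "oa = onorm (ReOp X)"
  define ob where "ob = onorm (ImOp X)"
  have oa0: "0 \<le> oa" unfolding oa_def by (rule onorm_pos_le[OF Re(1)])
  have ob0: "0 \<le> ob" unfolding ob_def by (rule onorm_pos_le[OF Im(1)])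
  have oX: "onorm X \<le> oa + ob"
  proof (rule onorm_bound)
    show "0 \<le> oa + ob" using oa0 ob0 by simp
    fix x
    have "norm (X x) \<le> norm (ReOp X x) + norm (\<i> *\<^sub>C ImOp X x)"
      using norm_triangle_ineq[of "ReOp X x" "\<i> *\<^sub>C ImOp X x"] by (simp only: dec[of x, symmetric])
    also have "\<dots> = norm (ReOp X x) + norm (ImOp X x)" by (simp add: norm_scaleC)
    also have "\<dots> \<le> oa * norm x + ob * norm x"
      unfolding oa_def ob_def by (rule add_mono[OF onorm[OF Re(1)] onorm[OF Im(1)]])
    finally show "norm (X x) \<le> (oa + ob) * norm x" by (simp add: distrib_right)
  qed
  have "cmod q / 2 * onorm X + cmod q / 2 * \<bar>oa - ob\<bar> \<le> cmod q / 2 * (oa + ob) + cmod q / 2 * \<bar>oa - ob\<bar>"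
    using oX qpos by simp
  also have "\<dots> = cmod q * max oa ob" by (rule maxl)
  also have "\<dots> \<le> cmod q * M" using Re(2) Im(2) qpos by (simp add: oa_def ob_def)
  also have "\<dots> = wq q (offdiag X)" using qpos by (simp add: M_def)
  finally show ?thesis by (simp add: oa_def ob_def)
qed

end
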